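(* Let $|\psi\rangle_{AB}=\frac{1}{\sqrt2}(|00\rangle+|11\rangle)\in\mathbb C^2\otimes\mathbb C^2$ and for $0\le\epsilon\le1$ let $\rho^{(\epsilon)}_{AB}=(1-\epsilon)|\psi\rangle\langle\psi|+\epsilon I_{AB}/4$. Define $\lambda(\epsilon)=\min\{\mu(\sigma_{AB}):\ \sigma_{AB}\text{ a two-qubit density matrix with }\langle\psi|\sigma_{AB}|\psi\rangle\ge 1-3\epsilon/4\}$. Then $\mu_{\mathrm{ent}}(\rho^{(\epsilon)}_{AB})=\lambda(\epsilon)$. Moreover, $\lambda(\epsilon)=0$ for $\epsilon\ge 2/3$, and for $\epsilon<2/3$ we have $1-3\epsilon/2\le\lambda(\epsilon)\le 1-\epsilon$.
   Context: For a bipartite density matrix $\rho_{AB}$ with reduced states $\rho_A,\rho_B$, the maximal correlation is $\mu(\rho_{AB})=\max |\mathrm{tr}(\rho_{AB}\, X_A\otimes Y_B^\dagger)|$ over $X_A\in\mathbf L(\mathcal H_A)$, $Y_B\in\mathbf L(\mathcal H_B)$ with $\mathrm{tr}(\rho_A X_A)=\mathrm{tr}(\rho_B Y_B)=0$ and $\mathrm{tr}(\rho_A X_AX_A^\dagger)=\mathrm{tr}(\rho_B Y_BY_B^\dagger)=1$. The maximal entanglement is $\mu_{\mathrm{ent}}(\rho_{AB})=\inf \max_i \mu(\tau^{(i)}_{AB})$, the infimum over all decompositions $\rho_{AB}=\sum_i p_i\tau^{(i)}_{AB}$ with $p_i\ge0$ and $\tau^{(i)}_{AB}$ density matrices. 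*)

theory Defs
  imports Complex_Main
begin

text \<open>Operators on a finite-dimensional Hilbert space with orthonormal basis indexed by
  a finite type 'a are represented as matrices 'a \<Rightarrow> 'a \<Rightarrow> complex
  (entry M i j = \<langle>i|M|j\<rangle>).  A bipartite space H_A \<otimes> H_B has basis indexed by 'a \<times> 'b.\<close>

type_synonym 'a cmat = "'a \<Rightarrow> 'a \<Rightarrow> complex"

definition mtrace :: "('a::finite) cmat \<Rightarrow> complex" where
  "mtrace M = (\<Sum>i\<in>UNIV. M i i)"

definition mmult :: "('a::finite) cmat \<Rightarrow> 'a cmat \<Rightarrow> 'a cmat" where
  "mmult M N = (\<lambda>i k. \<Sum>j\<in>UNIV. M i j * N j k)"

definition madj :: "'a cmat \<Rightarrow> 'a cmat" where
  "madj M = (\<lambda>i j. cnj (M j i))"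

definition mtensor :: "'a cmat \<Rightarrow> 'b cmat \<Rightarrow> ('a \<times> 'b) cmat" where
  "mtensor X Y = (\<lambda>(a, b) (a', b'). X a a' * Y b b')"

definition ptrace_B :: "('a \<times> 'b::finite) cmat \<Rightarrow> 'a cmat" where
  "ptrace_B \<rho> = (\<lambda>a a'. \<Sum>b\<in>UNIV. \<rho> (a, b) (a', b))"

definition ptrace_A :: "('a::finite \<times> 'b) cmat \<Rightarrow> 'b cmat" where
  "ptrace_A \<rho> = (\<lambda>b b'. \<Sum>a\<in>UNIV. \<rho> (a, b) (a, b'))"

definition qform :: "('a::finite) cmat \<Rightarrow> ('a \<Rightarrow> complex) \<Rightarrow> complex" where
  "qform M v = (\<Sum>i\<in>UNIV. \<Sum>j\<in>UNIV. cnj (v i) * M i j * v j)"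

definition hermitian :: "'a cmat \<Rightarrow> bool" where
  "hermitian M \<longleftrightarrow> madj M = M"

definition psd :: "('a::finite) cmat \<Rightarrow> bool" where
  "psd M \<longleftrightarrow> (\<forall>v. Im (qform M v) = 0 \<and> 0 \<le> Re (qform M v))"

definition density :: "('a::finite) cmat \<Rightarrow> bool" where
  "density M \<longleftrightarrow> hermitian M \<and> psd M \<and> mtrace M = 1"

text \<open>The maximum is rendered as a supremum; 0 is adjoined so that
  the (degenerate) case of an empty feasible set gets value 0 (all values are \<ge> 0, so this
  does not change the value when the feasible set is nonempty).\<close>
definition maxcorr :: "('a::finite \<times> 'b::finite) cmat \<Rightarrow> real" where
  "maxcorr \<rho> = Sup ({0} \<union>
     {cmod (mtrace (mmult \<rho> (mtensor X (madj Y)))) | (X::'a cmat) (Y::'b cmat).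
        mtrace (mmult (ptrace_B \<rho>) X) = 0 \<and> mtrace (mmult (ptrace_A \<rho>) Y) = 0 \<and>
        mtrace (mmult (ptrace_B \<rho>) (mmult X (madj X))) = 1 \<and>
        mtrace (mmult (ptrace_A \<rho>) (mmult Y (madj Y))) = 1})"

definition maxent :: "('a::finite \<times> 'b::finite) cmat \<Rightarrow> real" where
  "maxent \<rho> = Inf {Max ((\<lambda>i. maxcorr (\<tau> i)) ` {..<n}) | (n::nat) (p::nat \<Rightarrow> real) (\<tau>::nat \<Rightarrow> ('a \<times> 'b) cmat).
     0 < n \<and> (\<forall>i<n. 0 \<le> p i \<and> density (\<tau> i)) \<and>
     \<rho> = (\<lambda>x y. \<Sum>i<n. complex_of_real (p i) * \<tau> i x y)}"

text \<open>Qubit: basis |0>, |1> indexed by False, True.\<close>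
definition psi :: "bool \<times> bool \<Rightarrow> complex" where
  "psi = (\<lambda>(a, b). if a = b then complex_of_real (1 / sqrt 2) else 0)"

definition rho_eps :: "real \<Rightarrow> (bool \<times> bool) cmat" where
  "rho_eps \<epsilon> = (\<lambda>x y. complex_of_real (1 - \<epsilon>) * psi x * cnj (psi y)
                     + complex_of_real (\<epsilon> / 4) * (if x = y then 1 else 0))"

definition lam :: "real \<Rightarrow> real" where
  "lam \<epsilon> = Inf {maxcorr \<sigma> | \<sigma> :: (bool \<times> bool) cmat.
                 density \<sigma> \<and> Re (qform \<sigma> psi) \<ge> 1 - 3 * \<epsilon> / 4}"

end

theory Submission
  imports Defs
begin

definition sform :: "('i::finite) cmat \<Rightarrow> ('k::finite \<Rightarrow> 'i \<Rightarrow> complex) \<Rightarrow> ('k \<Rightarrow> 'i \<Rightarrow> complex) \<Rightarrow> complex" where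
  "sform \<rho> u w = (\<Sum>k\<in>UNIV. \<Sum>i\<in>UNIV. \<Sum>j\<in>UNIV. cnj (u k i) * \<rho> i j * w k j)"

lemma sform_self: "sform \<rho> u u = (\<Sum>k\<in>UNIV. qform \<rho> (u k))"
  unfolding sform_def qform_def by simp

lemma sform_self_nonneg:
  assumes "psd \<rho>" shows "Im (sform \<rho> u u) = 0" "0 \<le> Re (sform \<rho> u u)"
  using assms unfolding sform_self psd_def by (auto simp: Im_sum Re_sum intro: sum_nonneg)

lemma sform_herm:
  assumes "hermitian \<rho>" shows "sform \<rho> w u = cnj (sform \<rho> u w)"
proof -
  have h: "\<And>i j. cnj (\<rho> j i) = \<rho> i j" using assms unfolding hermitian_def madj_def by metis
  have "cnj (sform \<rho> u w) = (\<Sum>k\<in>UNIV. \<Sum>i\<in>UNIV. \<Sum>j\<in>UNIV. u k i * \<rho> j i * cnj (w k j))"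
    unfolding sform_def by (simp add: h mult.commute mult.left_commute)
  also have "\<dots> = (\<Sum>k\<in>UNIV. \<Sum>j\<in>UNIV. \<Sum>i\<in>UNIV. u k i * \<rho> j i * cnj (w k j))"
    by (rule sum.cong[OF refl], rule sum.swap)
  also have "\<dots> = sform \<rho> w u" unfolding sform_def by (simp add: mult.commute mult.left_commute)
  finally show ?thesis by simp
qed

lemma sform_expand:
  "sform \<rho> (\<lambda>k i. u k i - t * w k i) (\<lambda>k i. u k i - t * w k i)
   = sform \<rho> u u - t * sform \<rho> u w - cnj t * sform \<rho> w u + cnj t * t * sform \<rho> w w"
  unfolding sform_def
  by (simp add: algebra_simps sum.distrib sum_subtractf sum_distrib_left)

lemma sform_quad:
  assumes "psd \<rho>" "hermitian \<rho>"
  shows "0 \<le> Re (sform \<rho> u u) - 2 * r * (cmod (sform \<rho> u w))^2 + r^2 * (cmod (sform \<rho> u w))^2 * Re (sform \<rho> w w)"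
proof -
  define b where "b = sform \<rho> u w"
  define t where "t = complex_of_real r * cnj b"
  have nn: "0 \<le> Re (sform \<rho> (\<lambda>k i. u k i - t * w k i) (\<lambda>k i. u k i - t * w k i))"
    using sform_self_nonneg(2)[OF assms(1)] .
  have iu: "Im (sform \<rho> u u) = 0" and iw: "Im (sform \<rho> w w) = 0"
    using sform_self_nonneg(1)[OF assms(1)] by auto
  have wu: "sform \<rho> w u = cnj b" unfolding b_def using sform_herm[OF assms(2)] .
  have e: "Re (sform \<rho> (\<lambda>k i. u k i - t * w k i) (\<lambda>k i. u k i - t * w k i))
     = Re (sform \<rho> u u) - 2 * r * (cmod b)^2 + r^2 * (cmod b)^2 * Re (sform \<rho> w w)"
    unfolding sform_expand wu b_def[symmetric] t_def
    using iu iw cmod_power2[of b]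
    by (simp add: power2_eq_square algebra_simps)
  show ?thesis using nn e b_def by simp
qed

lemma sform_cs:
  assumes "psd \<rho>" "hermitian \<rho>"
  shows "(cmod (sform \<rho> u w))^2 \<le> Re (sform \<rho> u u) * Re (sform \<rho> w w)"
proof -
  define a where "a = Re (sform \<rho> u u)"
  define c where "c = Re (sform \<rho> w w)"
  define B where "B = (cmod (sform \<rho> u w))^2"
  have q: "\<And>r. 0 \<le> a - 2 * r * B + r^2 * B * c"
    using sform_quad[OF assms] unfolding a_def B_def c_def by blast
  have c0: "0 \<le> c" unfolding c_def using sform_self_nonneg(2)[OF assms(1)] .
  have B0: "0 \<le> B" unfolding B_def by simp
  show ?thesis
  proof (cases "c > 0")
    case True
    have "0 \<le> a - 2 * (1/c) * B + (1/c)^2 * B * c" using q .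
    also have "\<dots> = a - B / c" using True by (simp add: power2_eq_square field_simps)
    finally have "B / c \<le> a" by simp
    then show ?thesis using True unfolding a_def[symmetric] c_def[symmetric] B_def[symmetric]
      by (simp add: pos_divide_le_eq mult.commute)
  next
    case False
    then have "c = 0" using c0 by simp
    show ?thesis
    proof (cases "B = 0")
      case True then show ?thesis unfolding a_def[symmetric] c_def[symmetric] B_def[symmetric]
        using \<open>c = 0\<close> by simp
    next
      case False
      then have Bp: "B > 0" using B0 by simp
      have "0 \<le> a - 2 * ((a + 1) / (2 * B)) * B + ((a + 1) / (2 * B))^2 * B * c" using q .
      also have "\<dots> = -1" using Bp \<open>c = 0\<close> by (simp add: field_simps)
      finally show ?thesis by simp
    qed
  qed
qed

lemma sum_pair: "(\<Sum>x\<in>(UNIV::('a::finite\<times>'b::finite) set). f x) = (\<Sum>a\<in>UNIV. \<Sum>b\<in>UNIV. f (a,b))"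
  by (simp add: UNIV_Times_UNIV[symmetric] sum.cartesian_product del: UNIV_Times_UNIV)

lemma ifz1: "cnj (if P then x else 0) = (if P then cnj x else 0)" by simp
lemma ifz2: "(if P then x else 0) * y = (if P then x * y else (0::complex))" by simp
lemma ifz3: "y * (if P then x else 0) = (if P then y * x else (0::complex))" by simp
lemma ifz4: "(\<Sum>x\<in>A. if P then f x else 0) = (if P then \<Sum>x\<in>A. f x else (0::complex))" by simp
lemmas ifz = ifz1 ifz2 ifz3 ifz4

lemma perm4a: "(\<Sum>i\<in>A. \<Sum>j\<in>B. \<Sum>b\<in>C. \<Sum>c\<in>D. f i j b c) = (\<Sum>c\<in>D. \<Sum>b\<in>C. \<Sum>i\<in>A. \<Sum>j\<in>B. f i j b c)"
proof -
  have "(\<Sum>i\<in>A. \<Sum>j\<in>B. \<Sum>b\<in>C. \<Sum>c\<in>D. f i j b c) = (\<Sum>i\<in>A. \<Sum>j\<in>B. \<Sum>c\<in>D. \<Sum>b\<in>C. f i j b c)"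
    by (rule sum.cong[OF refl], rule sum.cong[OF refl], rule sum.swap)
  also have "\<dots> = (\<Sum>i\<in>A. \<Sum>c\<in>D. \<Sum>j\<in>B. \<Sum>b\<in>C. f i j b c)"
    by (rule sum.cong[OF refl], rule sum.swap)
  also have "\<dots> = (\<Sum>c\<in>D. \<Sum>i\<in>A. \<Sum>j\<in>B. \<Sum>b\<in>C. f i j b c)"
    by (rule sum.swap)
  also have "\<dots> = (\<Sum>c\<in>D. \<Sum>i\<in>A. \<Sum>b\<in>C. \<Sum>j\<in>B. f i j b c)"
    by (rule sum.cong[OF refl], rule sum.cong[OF refl], rule sum.swap)
  also have "\<dots> = (\<Sum>c\<in>D. \<Sum>b\<in>C. \<Sum>i\<in>A. \<Sum>j\<in>B. f i j b c)"
    by (rule sum.cong[OF refl], rule sum.swap)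
  finally show ?thesis .
qed

lemma perm4b: "(\<Sum>i\<in>A. \<Sum>j\<in>B. \<Sum>b\<in>C. \<Sum>c\<in>D. f i j b c) = (\<Sum>b\<in>C. \<Sum>c\<in>D. \<Sum>i\<in>A. \<Sum>j\<in>B. f i j b c)"
proof -
  have "(\<Sum>i\<in>A. \<Sum>j\<in>B. \<Sum>b\<in>C. \<Sum>c\<in>D. f i j b c) = (\<Sum>i\<in>A. \<Sum>b\<in>C. \<Sum>j\<in>B. \<Sum>c\<in>D. f i j b c)"
    by (rule sum.cong[OF refl], rule sum.swap)
  also have "\<dots> = (\<Sum>b\<in>C. \<Sum>i\<in>A. \<Sum>j\<in>B. \<Sum>c\<in>D. f i j b c)"
    by (rule sum.swap)
  also have "\<dots> = (\<Sum>b\<in>C. \<Sum>i\<in>A. \<Sum>c\<in>D. \<Sum>j\<in>B. f i j b c)"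
    by (rule sum.cong[OF refl], rule sum.cong[OF refl], rule sum.swap)
  also have "\<dots> = (\<Sum>b\<in>C. \<Sum>c\<in>D. \<Sum>i\<in>A. \<Sum>j\<in>B. f i j b c)"
    by (rule sum.cong[OF refl], rule sum.swap)
  finally show ?thesis .
qed

definition uX :: "('a::finite) cmat \<Rightarrow> ('a \<times> 'b) \<Rightarrow> ('a \<times> 'b::finite) \<Rightarrow> complex" where
  "uX X = (\<lambda>(c,d) (a',b'). if b' = d then X a' c else 0)"
definition wY :: "('b::finite) cmat \<Rightarrow> ('a \<times> 'b) \<Rightarrow> ('a::finite \<times> 'b) \<Rightarrow> complex" where
  "wY Y = (\<lambda>(c,d) (a,b). if a = c then Y b d else 0)"

lemma V_sform:
  fixes \<rho> :: "('a::finite \<times> 'b::finite) cmat"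
  shows "mtrace (mmult \<rho> (mtensor X (madj Y))) = sform \<rho> (wY Y) (uX X)"
  unfolding mtrace_def mmult_def mtensor_def madj_def sform_def uX_def wY_def
  apply (simp add: sum_pair ifz)
  apply (rule sum.cong[OF refl])
  apply (rule trans[OF _ sum.swap])
  apply (rule sum.cong[OF refl])
  apply (subst sum.swap)
  apply (simp add: mult_ac)
  done

lemma NA_sform:
  fixes \<rho> :: "('a::finite \<times> 'b::finite) cmat"
  shows "mtrace (mmult (ptrace_B \<rho>) (mmult X (madj X))) = sform \<rho> (uX X :: ('a\<times>'b) \<Rightarrow> _) (uX X)"
  unfolding mtrace_def mmult_def ptrace_B_def madj_def sform_def uX_def
  apply (simp add: sum_pair ifz sum_product)
  apply (subst perm4a)
  apply (simp add: mult_ac)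
  done

lemma NB_sform:
  fixes \<rho> :: "('a::finite \<times> 'b::finite) cmat"
  shows "mtrace (mmult (ptrace_A \<rho>) (mmult Y (madj Y))) = sform \<rho> (wY Y :: ('a\<times>'b) \<Rightarrow> _) (wY Y)"
  unfolding mtrace_def mmult_def ptrace_A_def madj_def sform_def wY_def
  apply (simp add: sum_pair ifz sum_product)
  apply (subst perm4b)
  apply (simp add: mult_ac)
  done

lemma value_le1:
  fixes \<rho> :: "('a::finite \<times> 'b::finite) cmat"
  assumes "psd \<rho>" "hermitian \<rho>"
    and "mtrace (mmult (ptrace_B \<rho>) (mmult X (madj X))) = 1"
    and "mtrace (mmult (ptrace_A \<rho>) (mmult Y (madj Y))) = 1"
  shows "cmod (mtrace (mmult \<rho> (mtensor X (madj Y)))) \<le> 1"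
proof -
  have "(cmod (sform \<rho> (wY Y :: ('a\<times>'b) \<Rightarrow> _) (uX X)))^2 \<le> Re (sform \<rho> (wY Y :: ('a\<times>'b) \<Rightarrow> _) (wY Y)) * Re (sform \<rho> (uX X :: ('a\<times>'b) \<Rightarrow> _) (uX X))"
    by (rule sform_cs[OF assms(1,2)])
  also have "\<dots> = 1" using assms(3,4) unfolding NA_sform NB_sform by simp
  finally have "(cmod (mtrace (mmult \<rho> (mtensor X (madj Y)))))^2 \<le> 1^2" unfolding V_sform by simp
  then show ?thesis by (rule power2_le_imp_le) simp
qed

lemma maxcorr_props:
  fixes \<rho> :: "('a::finite \<times> 'b::finite) cmat"
  assumes "psd \<rho>" "hermitian \<rho>"
  shows "0 \<le> maxcorr \<rho>" "maxcorr \<rho> \<le> 1"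
    and "\<And>X Y. mtrace (mmult (ptrace_B \<rho>) X) = 0 \<Longrightarrow> mtrace (mmult (ptrace_A \<rho>) Y) = 0 \<Longrightarrow>
        mtrace (mmult (ptrace_B \<rho>) (mmult X (madj X))) = 1 \<Longrightarrow>
        mtrace (mmult (ptrace_A \<rho>) (mmult Y (madj Y))) = 1 \<Longrightarrow>
        cmod (mtrace (mmult \<rho> (mtensor X (madj Y)))) \<le> maxcorr \<rho>"
proof -
  let ?S = "{0} \<union>
     {cmod (mtrace (mmult \<rho> (mtensor X (madj Y)))) | (X::'a cmat) (Y::'b cmat).
        mtrace (mmult (ptrace_B \<rho>) X) = 0 \<and> mtrace (mmult (ptrace_A \<rho>) Y) = 0 \<and>
        mtrace (mmult (ptrace_B \<rho>) (mmult X (madj X))) = 1 \<and>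
        mtrace (mmult (ptrace_A \<rho>) (mmult Y (madj Y))) = 1}"
  have m: "maxcorr \<rho> = Sup ?S" unfolding maxcorr_def by simp
  have ub: "\<And>x. x \<in> ?S \<Longrightarrow> x \<le> 1" using value_le1[OF assms] by auto
  have bdd: "bdd_above ?S" using ub by (auto simp: bdd_above_def)
  show "0 \<le> maxcorr \<rho>" unfolding m by (rule cSup_upper[OF _ bdd]) simp
  show "maxcorr \<rho> \<le> 1" unfolding m by (rule cSup_least) (use ub in auto)
  fix X Y
  assume "mtrace (mmult (ptrace_B \<rho>) X) = 0" "mtrace (mmult (ptrace_A \<rho>) Y) = 0"
        "mtrace (mmult (ptrace_B \<rho>) (mmult X (madj X))) = 1"
        "mtrace (mmult (ptrace_A \<rho>) (mmult Y (madj Y))) = 1"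
  then have "cmod (mtrace (mmult \<rho> (mtensor X (madj Y)))) \<in> ?S" by blast
  then show "cmod (mtrace (mmult \<rho> (mtensor X (madj Y)))) \<le> maxcorr \<rho>" unfolding m
    by (rule cSup_upper[OF _ bdd])
qed

lemma perm3: "(\<Sum>i\<in>A. \<Sum>j\<in>B. \<Sum>n\<in>C. f i j n) = (\<Sum>n\<in>C. \<Sum>i\<in>A. \<Sum>j\<in>B. f i j n)"
proof -
  have "(\<Sum>i\<in>A. \<Sum>j\<in>B. \<Sum>n\<in>C. f i j n) = (\<Sum>i\<in>A. \<Sum>n\<in>C. \<Sum>j\<in>B. f i j n)"
    by (rule sum.cong[OF refl], rule sum.swap)
  also have "\<dots> = (\<Sum>n\<in>C. \<Sum>i\<in>A. \<Sum>j\<in>B. f i j n)" by (rule sum.swap)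
  finally show ?thesis .
qed

definition mid :: "('a::finite) cmat" where "mid = (\<lambda>i j. if i = j then 1 else 0)"

lemma mmult_assoc: "mmult (mmult A B) C = mmult A (mmult B C)"
proof (rule ext, rule ext)
  fix i k
  have "mmult (mmult A B) C i k = (\<Sum>j\<in>UNIV. \<Sum>l\<in>UNIV. A i l * B l j * C j k)"
    unfolding mmult_def by (simp add: sum_distrib_right)
  also have "\<dots> = (\<Sum>l\<in>UNIV. \<Sum>j\<in>UNIV. A i l * B l j * C j k)" by (rule sum.swap)
  also have "\<dots> = mmult A (mmult B C) i k"
    unfolding mmult_def by (simp add: sum_distrib_left mult_ac)
  finally show "mmult (mmult A B) C i k = mmult A (mmult B C) i k" .
qed

lemma mtrace_comm: "mtrace (mmult A B) = mtrace (mmult B A)"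
  unfolding mtrace_def mmult_def by (subst sum.swap) (simp add: mult_ac)

lemma madj_mmult: "madj (mmult A B) = mmult (madj B) (madj A)"
  unfolding madj_def mmult_def by (simp add: mult_ac)

lemma madj_madj: "madj (madj A) = A"
  unfolding madj_def by simp

lemma madj_tensor: "madj (mtensor A B) = mtensor (madj A) (madj B)"
  unfolding madj_def mtensor_def by (auto simp: fun_eq_iff)

lemma tensor_mult: "mmult (mtensor A B) (mtensor C D) = mtensor (mmult A C) (mmult B D)"
  unfolding mmult_def mtensor_def
  by (auto simp: fun_eq_iff sum_pair sum_product mult_ac)

lemma mmult_mid_left: "mmult mid A = A" unfolding mmult_def mid_def by (simp add: ifz)
lemma mmult_mid_right: "mmult A mid = A" unfolding mmult_def mid_def by (simp add: ifz)
lemma mid_tensor: "mtensor mid mid = mid" unfolding mtensor_def mid_def by (auto simp: fun_eq_iff)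
lemma madj_mid: "madj mid = mid" unfolding madj_def mid_def by (auto simp: fun_eq_iff)

lemma ptB_trace:
  fixes \<rho> :: "('a::finite \<times> 'b::finite) cmat"
  shows "mtrace (mmult (ptrace_B \<rho>) X) = mtrace (mmult \<rho> (mtensor X mid))"
  unfolding mtrace_def mmult_def ptrace_B_def mtensor_def mid_def
  apply (simp add: sum_pair ifz sum_distrib_right)
  apply (rule sum.cong[OF refl], rule sum.swap)
  done

lemma ptA_trace:
  fixes \<rho> :: "('a::finite \<times> 'b::finite) cmat"
  shows "mtrace (mmult (ptrace_A \<rho>) Y) = mtrace (mmult \<rho> (mtensor mid Y))"
  unfolding mtrace_def mmult_def ptrace_A_def mtensor_def mid_def
  apply (simp add: sum_pair ifz sum_distrib_right)
  apply (rule perm3)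
  done

definition feas :: "('a::finite \<times> 'b::finite) cmat \<Rightarrow> 'a cmat \<Rightarrow> 'b cmat \<Rightarrow> bool" where
  "feas \<rho> X Y \<longleftrightarrow> mtrace (mmult (ptrace_B \<rho>) X) = 0 \<and> mtrace (mmult (ptrace_A \<rho>) Y) = 0 \<and>
        mtrace (mmult (ptrace_B \<rho>) (mmult X (madj X))) = 1 \<and>
        mtrace (mmult (ptrace_A \<rho>) (mmult Y (madj Y))) = 1"

definition mval :: "('a::finite \<times> 'b::finite) cmat \<Rightarrow> 'a cmat \<Rightarrow> 'b cmat \<Rightarrow> real" where
  "mval \<rho> X Y = cmod (mtrace (mmult \<rho> (mtensor X (madj Y))))"

lemma maxcorr_alt: "maxcorr \<rho> = Sup ({0} \<union> {mval \<rho> X Y | X Y. feas \<rho> X Y})"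
  unfolding maxcorr_def feas_def mval_def by simp

lemma maxcorr_le:
  assumes "\<And>X Y. feas \<rho> X Y \<Longrightarrow> mval \<rho> X Y \<le> c" "0 \<le> c"
  shows "maxcorr \<rho> \<le> c"
  unfolding maxcorr_alt by (rule cSup_least) (use assms in auto)

lemma maxcorr_ge:
  assumes "density \<rho>" "feas \<rho> X Y"
  shows "mval \<rho> X Y \<le> maxcorr \<rho>"
  using maxcorr_props(3)[of \<rho> X Y] assms unfolding density_def feas_def mval_def by auto

lemma maxcorr_nonneg: "density \<rho> \<Longrightarrow> 0 \<le> maxcorr \<rho>"
  using maxcorr_props(1) unfolding density_def by blast

definition lconj :: "('a::finite) cmat \<Rightarrow> 'a cmat \<Rightarrow> 'a cmat" where
  "lconj W \<sigma> = mmult (mmult W \<sigma>) (madj W)"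

definition unitary :: "('a::finite) cmat \<Rightarrow> bool" where
  "unitary U \<longleftrightarrow> mmult (madj U) U = mid \<and> mmult U (madj U) = mid"

lemma tr_lconj: "mtrace (mmult (lconj W \<sigma>) T) = mtrace (mmult \<sigma> (mmult (madj W) (mmult T W)))"
proof -
  have "mtrace (mmult (lconj W \<sigma>) T) = mtrace (mmult (mmult W \<sigma>) (mmult (madj W) T))"
    unfolding lconj_def by (simp add: mmult_assoc)
  also have "\<dots> = mtrace (mmult (mmult (madj W) T) (mmult W \<sigma>))" by (rule mtrace_comm)
  also have "\<dots> = mtrace (mmult (mmult (mmult (madj W) T) W) \<sigma>)" by (simp add: mmult_assoc)
  also have "\<dots> = mtrace (mmult \<sigma> (mmult (madj W) (mmult T W)))" by (subst mtrace_comm) (simp add: mmult_assoc)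
  finally show ?thesis .
qed

lemma conj_tensor: "mmult (madj (mtensor U V)) (mmult (mtensor A B) (mtensor U V))
   = mtensor (mmult (madj U) (mmult A U)) (mmult (madj V) (mmult B V))"
  by (simp add: madj_tensor tensor_mult)

lemma ptrace_B_lconj:
  fixes \<sigma> :: "('a::finite \<times> 'b::finite) cmat"
  assumes "unitary V"
  shows "mtrace (mmult (ptrace_B (lconj (mtensor U V) \<sigma>)) X) = mtrace (mmult (ptrace_B \<sigma>) (mmult (madj U) (mmult X U)))"
  using assms unfolding ptB_trace tr_lconj conj_tensor unitary_def
  by (simp add: mmult_mid_left)

lemma ptrace_A_lconj:
  fixes \<sigma> :: "('a::finite \<times> 'b::finite) cmat"
  assumes "unitary U"
  shows "mtrace (mmult (ptrace_A (lconj (mtensor U V) \<sigma>)) Y) = mtrace (mmult (ptrace_A \<sigma>) (mmult (madj V) (mmult Y V)))"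
  using assms unfolding ptA_trace tr_lconj conj_tensor unitary_def
  by (simp add: mmult_mid_left)

lemma conj_sq:
  assumes "unitary U"
  shows "mmult (madj U) (mmult (mmult X (madj X)) U) = mmult (mmult (madj U) (mmult X U)) (madj (mmult (madj U) (mmult X U)))"
proof -
  have "mmult (mmult (madj U) (mmult X U)) (madj (mmult (madj U) (mmult X U)))
      = mmult (madj U) (mmult X (mmult (mmult U (madj U)) (mmult (madj X) U)))"
    by (simp add: madj_mmult madj_madj mmult_assoc)
  also have "\<dots> = mmult (madj U) (mmult (mmult X (madj X)) U)"
    using assms unfolding unitary_def by (simp add: mmult_mid_left mmult_assoc)
  finally show ?thesis by simp
qed

lemma feas_lconj:
  fixes \<sigma> :: "('a::finite \<times> 'b::finite) cmat"
  assumes "unitary U" "unitary V" "feas (lconj (mtensor U V) \<sigma>) X Y"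
  shows "feas \<sigma> (mmult (madj U) (mmult X U)) (mmult (madj V) (mmult Y V))"
  using assms(3) unfolding feas_def ptrace_B_lconj[OF assms(2)] ptrace_A_lconj[OF assms(1)]
    conj_sq[OF assms(1)] conj_sq[OF assms(2)] by simp

lemma mval_lconj:
  fixes \<sigma> :: "('a::finite \<times> 'b::finite) cmat"
  shows "mval (lconj (mtensor U V) \<sigma>) X Y = mval \<sigma> (mmult (madj U) (mmult X U)) (mmult (madj V) (mmult Y V))"
  unfolding mval_def tr_lconj conj_tensor by (simp add: madj_mmult madj_madj mmult_assoc)

lemma maxcorr_lconj_le:
  fixes \<sigma> :: "('a::finite \<times> 'b::finite) cmat"
  assumes "unitary U" "unitary V" "density \<sigma>"
  shows "maxcorr (lconj (mtensor U V) \<sigma>) \<le> maxcorr \<sigma>"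
  apply (rule maxcorr_le)
  unfolding mval_lconj
   apply (rule maxcorr_ge[OF assms(3) feas_lconj[OF assms(1,2)]], assumption)
  by (rule maxcorr_nonneg[OF assms(3)])

lemma qform_lconj: "qform (lconj W \<sigma>) v = qform \<sigma> (\<lambda>k. \<Sum>i\<in>UNIV. cnj (W i k) * v i)"
proof -
  have "qform (lconj W \<sigma>) v = (\<Sum>i\<in>UNIV. \<Sum>j\<in>UNIV. \<Sum>l\<in>UNIV. \<Sum>k\<in>UNIV. cnj (v i) * W i k * \<sigma> k l * cnj (W j l) * v j)"
    unfolding qform_def lconj_def mmult_def madj_def
    by (simp add: sum_distrib_left sum_distrib_right mult_ac)
  also have "\<dots> = (\<Sum>k\<in>UNIV. \<Sum>l\<in>UNIV. \<Sum>i\<in>UNIV. \<Sum>j\<in>UNIV. cnj (v i) * W i k * \<sigma> k l * cnj (W j l) * v j)"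
    by (rule perm4a)
  also have "\<dots> = qform \<sigma> (\<lambda>k. \<Sum>i\<in>UNIV. cnj (W i k) * v i)"
    unfolding qform_def
    by (simp add: sum_distrib_left sum_distrib_right mult_ac)
  finally show ?thesis .
qed

lemma unitary_tensor: "unitary U \<Longrightarrow> unitary V \<Longrightarrow> unitary (mtensor U V)"
  unfolding unitary_def by (simp add: madj_tensor tensor_mult mid_tensor)

lemma density_lconj:
  assumes "unitary W" "density \<sigma>"
  shows "density (lconj W \<sigma>)"
proof -
  have h: "madj \<sigma> = \<sigma>" using assms(2) unfolding density_def hermitian_def by simp
  have "hermitian (lconj W \<sigma>)" unfolding hermitian_def lconj_def
    by (simp add: madj_mmult madj_madj mmult_assoc h)
  moreover have "psd (lconj W \<sigma>)" using assms(2) unfolding density_def psd_def qform_lconj by simp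
  moreover have "mtrace (lconj W \<sigma>) = 1"
  proof -
    have "mtrace (lconj W \<sigma>) = mtrace (mmult (lconj W \<sigma>) mid)" by (simp add: mmult_mid_right)
    also have "\<dots> = mtrace \<sigma>" unfolding tr_lconj using assms(1) unfolding unitary_def
      by (simp add: mmult_mid_left mmult_mid_right)
    finally show ?thesis using assms(2) unfolding density_def by simp
  qed
  ultimately show ?thesis unfolding density_def by simp
qed

definition mk2 :: "complex \<Rightarrow> complex \<Rightarrow> complex \<Rightarrow> complex \<Rightarrow> bool cmat" where
  "mk2 a b c d = (\<lambda>i j. if i then (if j then d else c) else (if j then b else a))"

definition cnjm :: "'a cmat \<Rightarrow> 'a cmat" where "cnjm U = (\<lambda>i j. cnj (U i j))"

definition Uk :: "nat \<Rightarrow> bool cmat" where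
  "Uk k = (if k = 0 then mk2 1 0 0 1
    else if k = 1 then mk2 0 1 1 0
    else if k = 2 then mk2 0 (- \<i>) \<i> 0
    else if k = 3 then mk2 1 0 0 (-1)
    else if k = 4 then mk2 (Complex (1/2) (-1/2)) (Complex (-1/2) (-1/2)) (Complex (1/2) (-1/2)) (Complex (1/2) (1/2))
    else if k = 5 then mk2 (Complex (-1/2) (-1/2)) (Complex (1/2) (-1/2)) (Complex (1/2) (1/2)) (Complex (1/2) (-1/2))
    else if k = 6 then mk2 (Complex (1/2) (-1/2)) (Complex (-1/2) (-1/2)) (Complex (-1/2) (1/2)) (Complex (-1/2) (-1/2))
    else if k = 7 then mk2 (Complex (1/2) (-1/2)) (Complex (1/2) (1/2)) (Complex (1/2) (-1/2)) (Complex (-1/2) (-1/2))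
    else if k = 8 then mk2 (Complex (-1/2) (-1/2)) (Complex (-1/2) (-1/2)) (Complex (1/2) (-1/2)) (Complex (-1/2) (1/2))
    else if k = 9 then mk2 (Complex (-1/2) (-1/2)) (Complex (-1/2) (-1/2)) (Complex (-1/2) (1/2)) (Complex (1/2) (-1/2))
    else if k = 10 then mk2 (Complex (1/2) (-1/2)) (Complex (-1/2) (1/2)) (Complex (-1/2) (-1/2)) (Complex (-1/2) (-1/2))
    else mk2 (Complex (-1/2) (-1/2)) (Complex (1/2) (1/2)) (Complex (1/2) (-1/2)) (Complex (1/2) (-1/2)))"

definition Wk :: "nat \<Rightarrow> (bool \<times> bool) cmat" where
  "Wk k = mtensor (Uk k) (cnjm (Uk k))"

definition tcoef :: "bool \<times> bool \<Rightarrow> bool \<times> bool \<Rightarrow> bool \<times> bool \<Rightarrow> bool \<times> bool \<Rightarrow> complex" where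
  "tcoef x y k l = (\<Sum>u<12. Wk u x k * cnj (Wk u y l)) / 12"

definition dg :: "bool \<times> bool \<Rightarrow> complex" where "dg k = (if fst k = snd k then 1 else 0)"
definition dl :: "bool \<times> bool \<Rightarrow> bool \<times> bool \<Rightarrow> complex" where "dl k l = (if k = l then 1 else 0)"

lemma sum12: "(\<Sum>u<(12::nat). f u) = f 0 + f 1 + f 2 + f 3 + f 4 + f 5 + f 6 + f 7 + f 8 + f 9 + f 10 + (f 11::complex)"
  by (simp add: numeral_eq_Suc lessThan_Suc)

lemma tcoef_eq: "tcoef (a1,a2) (b1,b2) (c1,c2) (d1,d2) =
   dg (c1,c2) * dg (d1,d2) / 2 * (dg (a1,a2) * dg (b1,b2) / 2)
   + (dl (c1,c2) (d1,d2) - dg (c1,c2) * dg (d1,d2) / 2) * (dl (a1,a2) (b1,b2) - dg (a1,a2) * dg (b1,b2) / 2) / 3"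
  unfolding tcoef_def sum12
  by (cases a1; cases a2; cases b1; cases b2; cases c1; cases c2; cases d1; cases d2)
     (simp_all add: Wk_def Uk_def mtensor_def cnjm_def mk2_def dg_def dl_def complex_eq_iff)

lemma tcoef_eq': "tcoef x y k l = dg k * dg l / 2 * (dg x * dg y / 2) + (dl k l - dg k * dg l / 2) * (dl x y - dg x * dg y / 2) / 3"
  by (cases x; cases y; cases k; cases l) (simp only: tcoef_eq)

lemma psi_dg: "psi k = complex_of_real (1 / sqrt 2) * dg k"
  unfolding psi_def dg_def by (cases k) auto

lemma cnj_psi: "cnj (psi k) = psi k"
  unfolding psi_def by (cases k) auto

lemma psi_psi: "psi k * psi l = dg k * dg l / 2"
proof -
  have "complex_of_real (1 / sqrt 2) * complex_of_real (1 / sqrt 2) = 1/2"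
  proof -
    have r: "(1/sqrt 2) * (1/sqrt 2) = (1/2::real)" by simp
    show ?thesis by (simp only: of_real_mult[symmetric] r) simp
  qed
  then show ?thesis unfolding psi_dg by (simp add: algebra_simps)
qed

lemma lconj_entry: "lconj W \<sigma> x y = (\<Sum>k\<in>UNIV. \<Sum>l\<in>UNIV. W x k * \<sigma> k l * cnj (W y l))"
  unfolding lconj_def mmult_def madj_def
  by (simp add: sum_distrib_right) (rule sum.swap)

lemma lin2: "(\<Sum>k\<in>A. \<Sum>l\<in>B. f k l * (a k l * P + (c k l - a k l) * D))
   = (\<Sum>k\<in>A. \<Sum>l\<in>B. f k l * a k l) * P + ((\<Sum>k\<in>A. \<Sum>l\<in>B. f k l * c k l) - (\<Sum>k\<in>A. \<Sum>l\<in>B. f k l * a k l)) * (D::complex)"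
  by (simp add: algebra_simps sum.distrib sum_subtractf sum_distrib_left sum_distrib_right)

definition Pm :: "(bool \<times> bool) cmat" where "Pm = (\<lambda>x y. psi x * cnj (psi y))"

lemma twirl:
  "(\<Sum>u<(12::nat). lconj (Wk u) \<sigma> x y) / 12
   = qform \<sigma> psi * Pm x y + (mtrace \<sigma> - qform \<sigma> psi) * (mid x y - Pm x y) / 3"
proof -
  have "(\<Sum>u<(12::nat). lconj (Wk u) \<sigma> x y) / 12 = (\<Sum>u<(12::nat). \<Sum>k\<in>UNIV. \<Sum>l\<in>UNIV. \<sigma> k l * (Wk u x k * cnj (Wk u y l))) / 12"
    unfolding lconj_entry by (simp add: mult_ac)
  also have "\<dots> = (\<Sum>k\<in>UNIV. \<Sum>l\<in>UNIV. \<sigma> k l * tcoef x y k l)"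
    unfolding tcoef_def
    by (simp add: perm3[of _ "{..<12::nat}"] sum_divide_distrib sum_distrib_left)
  also have "\<dots> = qform \<sigma> psi * Pm x y + (mtrace \<sigma> - qform \<sigma> psi) * (mid x y - Pm x y) / 3"
  proof -
    have m: "mtrace \<sigma> = (\<Sum>k\<in>UNIV. \<Sum>l\<in>UNIV. \<sigma> k l * dl k l)"
      unfolding mtrace_def dl_def by (simp add: ifz)
    have q: "qform \<sigma> psi = (\<Sum>k\<in>UNIV. \<Sum>l\<in>UNIV. \<sigma> k l * (dg k * dg l / 2))"
      unfolding qform_def cnj_psi
      by (rule sum.cong[OF refl], rule sum.cong[OF refl]) (simp add: psi_psi[symmetric] mult_ac)
    have p: "Pm x y = dg x * dg y / 2" unfolding Pm_def cnj_psi psi_psi ..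
    have md: "mid x y = dl x y" unfolding mid_def dl_def ..
    show ?thesis unfolding m q p md tcoef_eq'
      using lin2[of \<sigma> "\<lambda>k l. dg k * dg l / 2" "dg x * dg y / 2" dl "(dl x y - dg x * dg y / 2) / 3" UNIV UNIV]
      by (simp add: mult_ac)
  qed
  finally show ?thesis .
qed

lemma sum_bool: "(\<Sum>b\<in>(UNIV::bool set). f b) = f False + f True"
  by (simp add: UNIV_bool)

lemma unitary_Uk: "unitary (Uk k)"
  unfolding unitary_def Uk_def mmult_def madj_def mid_def mk2_def
  by (auto simp: fun_eq_iff sum_bool complex_eq_iff)

lemma unitary_cnjm_Uk: "unitary (cnjm (Uk k))"
  unfolding unitary_def Uk_def mmult_def madj_def mid_def mk2_def cnjm_def
  by (auto simp: fun_eq_iff sum_bool complex_eq_iff)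

lemma unitary_Wk: "unitary (Wk k)"
  unfolding Wk_def by (rule unitary_tensor[OF unitary_Uk unitary_cnjm_Uk])

lemma ifz5: "(if P \<and> Q then x else 0) = (if P then (if Q then x else 0) else (0::complex))" by simp

definition ebs :: "('a \<times> 'b) \<Rightarrow> ('a::finite \<times> 'b::finite) cmat" where
  "ebs z = (\<lambda>x y. if x = z \<and> y = z then 1 else 0)"

lemma density_ebs: "density (ebs z)"
proof -
  have "hermitian (ebs z)" unfolding hermitian_def madj_def ebs_def by (auto simp: fun_eq_iff)
  moreover have "psd (ebs z)"
  proof -
    have e: "\<And>v. qform (ebs z) v = cnj (v z) * v z" unfolding qform_def ebs_def by (simp add: ifz ifz5)
    have "\<And>x. cnj x * x = complex_of_real ((Re x)\<^sup>2 + (Im x)\<^sup>2)"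
      by (metis complex_mult_cnj mult.commute)
    then show ?thesis unfolding psd_def e by simp
  qed
  moreover have "mtrace (ebs z) = 1" unfolding mtrace_def ebs_def by simp
  ultimately show ?thesis unfolding density_def by simp
qed

lemma ebs_ptB: "mtrace (mmult (ptrace_B (ebs (a0,b0))) X) = X a0 a0"
  unfolding mtrace_def mmult_def ptrace_B_def ebs_def by (simp add: ifz ifz5)

lemma ebs_val: "mtrace (mmult (ebs (a0,b0)) (mtensor X (madj Y))) = X a0 a0 * cnj (Y b0 b0)"
  unfolding mtrace_def mmult_def mtensor_def madj_def ebs_def by (simp add: ifz ifz5 sum_pair)

lemma maxcorr_ebs: "maxcorr (ebs z) = 0"
proof -
  obtain a0 b0 where z: "z = (a0, b0)" by (cases z) simp
  have le: "maxcorr (ebs z) \<le> 0"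
  proof (rule maxcorr_le)
    fix X Y assume "feas (ebs z) X Y"
    then have "X a0 a0 = 0" unfolding feas_def z ebs_ptB by simp
    then show "mval (ebs z) X Y \<le> 0" unfolding mval_def z ebs_val by simp
  qed simp
  show ?thesis using le maxcorr_nonneg[OF density_ebs, of z] by simp
qed

lemma qform_lin: "qform (\<lambda>x y. a * A x y + b * B x y) v = a * qform A v + b * qform B v"
  unfolding qform_def by (simp add: algebra_simps sum.distrib sum_distrib_left)

lemma mtrace_lin: "mtrace (\<lambda>x y. a * A x y + b * B x y) = a * mtrace A + b * mtrace B"
  unfolding mtrace_def by (simp add: sum.distrib sum_distrib_left)

lemma rho_alt: "rho_eps \<epsilon> = (\<lambda>x y. complex_of_real (1 - \<epsilon>) * Pm x y + complex_of_real (\<epsilon> / 4) * mid x y)"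
  unfolding rho_eps_def Pm_def mid_def by (simp add: fun_eq_iff mult.assoc)

lemma Pm_dg: "Pm x y = dg x * dg y / 2" unfolding Pm_def cnj_psi psi_psi ..

lemma qform_Pm: "qform Pm v = cnj (\<Sum>j\<in>UNIV. psi j * v j) * (\<Sum>j\<in>UNIV. psi j * v j)"
  unfolding qform_def Pm_def
  apply (simp add: sum_product mult_ac cnj_psi)
  apply (subst sum.swap)
  apply (simp add: mult_ac)
  done

lemma cms: "Im (cnj s * s) = 0 \<and> 0 \<le> Re (cnj s * s)"
  by simp

lemma density_Pm: "density Pm"
proof -
  have "hermitian Pm" unfolding hermitian_def madj_def Pm_def by (simp add: fun_eq_iff mult.commute cnj_psi)
  moreover have "psd Pm"
    unfolding psd_def qform_Pm by (intro allI) (rule cms)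
  moreover have "mtrace Pm = 1" unfolding mtrace_def Pm_dg by (simp add: sum_pair sum_bool dg_def)
  ultimately show ?thesis unfolding density_def by simp
qed

lemma qform_mid: "qform mid v = (\<Sum>i\<in>UNIV. cnj (v i) * v i)"
  unfolding qform_def mid_def by (simp add: ifz)

lemma density_rho:
  assumes "0 \<le> \<epsilon>" "\<epsilon> \<le> 1"
  shows "density (rho_eps \<epsilon>)"
proof -
  have "hermitian (rho_eps \<epsilon>)" unfolding hermitian_def madj_def rho_alt Pm_def mid_def
    by (simp add: fun_eq_iff mult.commute cnj_psi)
  moreover have "psd (rho_eps \<epsilon>)"
    unfolding psd_def
  proof (intro allI)
    fix v
    have p1: "Im (qform Pm v) = 0 \<and> 0 \<le> Re (qform Pm v)" using density_Pm unfolding density_def psd_def by blast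
    have p2: "Im (qform mid v) = 0 \<and> 0 \<le> Re (qform mid v)"
      unfolding qform_mid using cms by (simp add: sum_nonneg)
    have "0 \<le> (1 - \<epsilon>) * Re (qform Pm v) + \<epsilon> * Re (qform mid v) / 4"
      using p1 p2 assms by (intro add_nonneg_nonneg mult_nonneg_nonneg divide_nonneg_nonneg) auto
    then show "Im (qform (rho_eps \<epsilon>) v) = 0 \<and> 0 \<le> Re (qform (rho_eps \<epsilon>) v)"
      unfolding rho_alt qform_lin using p1 p2 by simp
  qed
  moreover have "mtrace (rho_eps \<epsilon>) = 1"
  proof -
    have "mtrace (mid :: (bool\<times>bool) cmat) = 4" unfolding mtrace_def mid_def
      by (simp add: UNIV_Times_UNIV[symmetric] card_cartesian_product del: UNIV_Times_UNIV)
    then show ?thesis unfolding rho_alt mtrace_lin using density_Pm unfolding density_def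
      by (simp add: algebra_simps flip: of_real_mult of_real_diff of_real_add)
  qed
  ultimately show ?thesis unfolding density_def by simp
qed

lemma fid_rho: "qform (rho_eps \<epsilon>) psi = complex_of_real (1 - 3 * \<epsilon> / 4)"
proof -
  have a: "qform Pm psi = 1" unfolding qform_Pm psi_psi by (simp add: sum_pair sum_bool dg_def)
  have b: "qform mid psi = 1" unfolding qform_mid cnj_psi psi_psi by (simp add: sum_pair sum_bool dg_def)
  show ?thesis unfolding rho_alt qform_lin a b by (simp add: algebra_simps)
qed

definition hm :: "bool cmat" where "hm = (\<lambda>a a'. if a = a' then 1/2 else 0)"

lemma ptB_Pm: "ptrace_B Pm = hm"
  unfolding ptrace_B_def Pm_dg hm_def dg_def by (auto simp: fun_eq_iff sum_bool)
lemma ptA_Pm: "ptrace_A Pm = hm"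
  unfolding ptrace_A_def Pm_dg hm_def dg_def by (auto simp: fun_eq_iff sum_bool)
lemma ptB_rho: "ptrace_B (rho_eps \<epsilon>) = hm"
  unfolding ptrace_B_def rho_alt Pm_dg hm_def dg_def mid_def by (auto simp: fun_eq_iff sum_bool field_simps)
lemma ptA_rho: "ptrace_A (rho_eps \<epsilon>) = hm"
  unfolding ptrace_A_def rho_alt Pm_dg hm_def dg_def mid_def by (auto simp: fun_eq_iff sum_bool field_simps)

lemma tr_hm: "mtrace (mmult hm X) = (X False False + X True True) / 2"
  unfolding mtrace_def mmult_def hm_def by (simp add: sum_bool add_divide_distrib)

lemma tr_tensor: "mtrace (mtensor X (madj Y) :: (bool\<times>bool) cmat) = (X False False + X True True) * (cnj (Y False False) + cnj (Y True True))"
  unfolding mtrace_def mtensor_def madj_def by (simp add: sum_pair sum_bool algebra_simps)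

lemma tr_mmult_lin: "mtrace (mmult (\<lambda>x y. a * A x y + b * B x y) T) = a * mtrace (mmult A T) + b * mtrace (mmult B T)"
  unfolding mtrace_def mmult_def by (simp add: algebra_simps sum.distrib sum_distrib_left)

lemma tr_mid: "mtrace (mmult mid T) = mtrace T"
  by (simp add: mmult_mid_left)

lemma maxcorr_rho_le:
  assumes "0 \<le> \<epsilon>" "\<epsilon> \<le> 1"
  shows "maxcorr (rho_eps \<epsilon>) \<le> 1 - \<epsilon>"
proof (rule maxcorr_le)
  fix X Y assume f: "feas (rho_eps \<epsilon>) X Y"
  then have fP: "feas Pm X Y" unfolding feas_def ptB_rho ptA_rho ptB_Pm ptA_Pm .
  from f have "X False False + X True True = 0" unfolding feas_def ptB_rho tr_hm by simp
  then have eq: "mtrace (mmult (rho_eps \<epsilon>) (mtensor X (madj Y))) = complex_of_real (1 - \<epsilon>) * mtrace (mmult Pm (mtensor X (madj Y)))"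
    unfolding rho_alt tr_mmult_lin tr_mid tr_tensor by simp
  have "mval (rho_eps \<epsilon>) X Y = (1 - \<epsilon>) * mval Pm X Y"
  proof -
    have c: "cmod (1 - complex_of_real \<epsilon>) = 1 - \<epsilon>" using assms
      by (metis abs_of_nonneg diff_ge_0_iff_ge norm_of_real of_real_1 of_real_diff)
    show ?thesis using eq unfolding mval_def by (simp add: norm_mult c)
  qed
  also have "\<dots> \<le> (1 - \<epsilon>) * 1"
    using value_le1[of Pm X Y] fP density_Pm assms unfolding feas_def density_def mval_def
    by (intro mult_left_mono) auto
  finally show "mval (rho_eps \<epsilon>) X Y \<le> 1 - \<epsilon>" by simp
qed (use assms in simp)

lemma orth3_nz:
  fixes a1 a2 a3 b1 b2 b3 :: real
  shows "\<exists>n1 n2 n3. n1\<^sup>2 + n2\<^sup>2 + n3\<^sup>2 \<noteq> 0 \<and> a1*n1 + a2*n2 + a3*n3 = 0 \<and> b1*n1 + b2*n2 + b3*n3 = 0"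
proof (cases "(a2*b3 - a3*b2)\<^sup>2 + (a3*b1 - a1*b3)\<^sup>2 + (a1*b2 - a2*b1)\<^sup>2 \<noteq> 0")
  case True
  then show ?thesis
    by (rule_tac x="a2*b3 - a3*b2" in exI, rule_tac x="a3*b1 - a1*b3" in exI, rule_tac x="a1*b2 - a2*b1" in exI)
       (simp add: algebra_simps)
next
  case False
  then have c1: "a2*b3 - a3*b2 = 0" and c2: "a3*b1 - a1*b3 = 0" and c3: "a1*b2 - a2*b1 = 0"
    by (simp_all add: sum_power2_eq_zero_iff add_nonneg_eq_0_iff)
  show ?thesis
  proof (cases "a1\<^sup>2 + a2\<^sup>2 \<noteq> 0")
    case True
    then show ?thesis using c3
      by (rule_tac x="-a2" in exI, rule_tac x="a1" in exI, rule_tac x="0" in exI) (simp add: algebra_simps)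
  next
    case False
    then have a1: "a1 = 0" and a2: "a2 = 0" by (simp_all add: sum_power2_eq_zero_iff)
    show ?thesis
    proof (cases "a3 = 0")
      case False
      then have "b1 = 0" using c2 a1 by simp
      then show ?thesis using a1
        by (rule_tac x="1" in exI, rule_tac x="0" in exI, rule_tac x="0" in exI) simp
    next
      case True
      show ?thesis
      proof (cases "b1\<^sup>2 + b2\<^sup>2 \<noteq> 0")
        case True
        then show ?thesis using a1 a2 \<open>a3 = 0\<close>
          by (rule_tac x="-b2" in exI, rule_tac x="b1" in exI, rule_tac x="0" in exI) (simp add: algebra_simps)
      next
        case False
        then have "b1 = 0" by (simp add: sum_power2_eq_zero_iff)
        then show ?thesis using a1 a2 \<open>a3 = 0\<close>
          by (rule_tac x="1" in exI, rule_tac x="0" in exI, rule_tac x="0" in exI) simp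
      qed
    qed
  qed
qed

lemma orth3:
  fixes a1 a2 a3 b1 b2 b3 :: real
  shows "\<exists>c x y. c\<^sup>2 + x\<^sup>2 + y\<^sup>2 = 1 \<and> a1*c + a2*x + a3*y = 0 \<and> b1*c + b2*x + b3*y = 0"
proof -
  obtain n1 n2 n3 where nz: "n1\<^sup>2 + n2\<^sup>2 + n3\<^sup>2 \<noteq> 0" and o1: "a1*n1 + a2*n2 + a3*n3 = 0"
    and o2: "b1*n1 + b2*n2 + b3*n3 = 0" using orth3_nz by blast
  define r where "r = sqrt (n1\<^sup>2 + n2\<^sup>2 + n3\<^sup>2)"
  have "0 < n1\<^sup>2 + n2\<^sup>2 + n3\<^sup>2" using nz by (simp add: less_le add_nonneg_nonneg)
  then have rp: "r > 0" unfolding r_def by simp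
  have r2: "r\<^sup>2 = n1\<^sup>2 + n2\<^sup>2 + n3\<^sup>2" unfolding r_def by (simp add: add_nonneg_nonneg)
  show ?thesis
  proof (rule exI[of _ "n1/r"], rule exI[of _ "n2/r"], rule exI[of _ "n3/r"], intro conjI)
    show "(n1/r)\<^sup>2 + (n2/r)\<^sup>2 + (n3/r)\<^sup>2 = 1" using rp r2 nz by (simp add: power_divide add_divide_distrib[symmetric])
    show "a1*(n1/r) + a2*(n2/r) + a3*(n3/r) = 0" using o1 rp by (simp add: field_simps)
    show "b1*(n1/r) + b2*(n2/r) + b3*(n3/r) = 0" using o2 rp by (simp add: field_simps)
  qed
qed

lemma herm_entry: "hermitian H \<Longrightarrow> cnj (H j i) = H i j"
  unfolding hermitian_def madj_def by metis

lemma herm_ptB: "hermitian \<sigma> \<Longrightarrow> hermitian (ptrace_B \<sigma>)"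
  unfolding hermitian_def madj_def ptrace_B_def
  by (simp add: fun_eq_iff)

lemma herm_ptA: "hermitian \<sigma> \<Longrightarrow> hermitian (ptrace_A \<sigma>)"
  unfolding hermitian_def madj_def ptrace_A_def
  by (simp add: fun_eq_iff)

lemma tr_ptB: "mtrace (ptrace_B \<sigma>) = mtrace \<sigma>"
  unfolding mtrace_def ptrace_B_def by (simp add: sum_pair)

lemma tr_ptA: "mtrace (ptrace_A \<sigma>) = mtrace \<sigma>"
  unfolding mtrace_def ptrace_A_def by (simp add: sum_pair) (rule sum.swap)

lemma qpsi: "qform \<sigma> psi = (\<Sum>k\<in>UNIV. \<Sum>l\<in>UNIV. \<sigma> k l * (dg k * dg l / 2))"
  unfolding qform_def cnj_psi
  by (rule sum.cong[OF refl], rule sum.cong[OF refl]) (simp add: psi_psi[symmetric] mult_ac)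

lemma tr_M: "mtrace (mmult \<sigma> (\<lambda>p q. dg p * dg q + u p * cnj (u q) - mid p q)) = 2 * qform \<sigma> psi + qform \<sigma> u - mtrace \<sigma>"
  unfolding qpsi unfolding mtrace_def mmult_def mid_def qform_def
  by (simp add: algebra_simps sum.distrib sum_subtractf sum_distrib_left ifz)

definition Xw :: "real \<Rightarrow> real \<Rightarrow> real \<Rightarrow> bool cmat" where
  "Xw c x y = mk2 (complex_of_real c) (Complex x y) (Complex x (-y)) (- complex_of_real c)"

lemma herm_bool: "hermitian (H :: bool cmat) \<Longrightarrow> Im (H a a) = 0 \<and> H True False = cnj (H False True)"
  using herm_entry[of H a a] herm_entry[of H False True] by (simp add: complex_eq_iff)

lemma trAX:
  assumes "hermitian A"
  shows "mtrace (mmult A (Xw c x y)) = complex_of_real ((Re (A False False) - Re (A True True)) * c + 2 * Re (A False True) * x + 2 * Im (A False True) * y)"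
  using herm_bool[OF assms, of False] herm_bool[OF assms, of True]
  unfolding mtrace_def mmult_def Xw_def mk2_def
  by (simp add: sum_bool complex_eq_iff algebra_simps)

lemma trBY:
  assumes "hermitian B"
  shows "mtrace (mmult B (cnjm (Xw c x y))) = complex_of_real ((Re (B False False) - Re (B True True)) * c + 2 * Re (B False True) * x - 2 * Im (B False True) * y)"
  using herm_bool[OF assms, of False] herm_bool[OF assms, of True]
  unfolding mtrace_def mmult_def Xw_def mk2_def cnjm_def
  by (simp add: sum_bool complex_eq_iff algebra_simps)

lemma XX:
  assumes "c\<^sup>2 + x\<^sup>2 + y\<^sup>2 = 1"
  shows "mmult (Xw c x y) (madj (Xw c x y)) = mid" "mmult (cnjm (Xw c x y)) (madj (cnjm (Xw c x y))) = mid"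
  using assms unfolding mmult_def madj_def Xw_def mk2_def mid_def cnjm_def
  by (auto simp: fun_eq_iff sum_bool complex_eq_iff algebra_simps power2_eq_square)

lemma tensor_id:
  assumes "c\<^sup>2 + x\<^sup>2 + y\<^sup>2 = 1"
  shows "mtensor (Xw c x y) (madj (cnjm (Xw c x y))) = (\<lambda>p q. dg p * dg q + (\<lambda>(a,b). Xw c x y a b) p * cnj ((\<lambda>(a,b). Xw c x y a b) q) - mid p q)"
  using assms unfolding mtensor_def madj_def Xw_def mk2_def mid_def cnjm_def dg_def
  by (auto simp: fun_eq_iff complex_eq_iff algebra_simps power2_eq_square)

lemma witness:
  fixes \<sigma> :: "(bool \<times> bool) cmat"
  assumes d: "density \<sigma>"
  shows "2 * Re (qform \<sigma> psi) - 1 \<le> maxcorr \<sigma>"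
proof -
  have hs: "hermitian \<sigma>" and ps: "psd \<sigma>" and ts: "mtrace \<sigma> = 1" using d unfolding density_def by auto
  define A where "A = ptrace_B \<sigma>"
  define B where "B = ptrace_A \<sigma>"
  have hA: "hermitian A" unfolding A_def by (rule herm_ptB[OF hs])
  have hB: "hermitian B" unfolding B_def by (rule herm_ptA[OF hs])
  obtain c x y where n: "c\<^sup>2 + x\<^sup>2 + y\<^sup>2 = 1"
    and o1: "(Re (A False False) - Re (A True True)) * c + (2 * Re (A False True)) * x + (2 * Im (A False True)) * y = 0"
    and o2: "(Re (B False False) - Re (B True True)) * c + (2 * Re (B False True)) * x + (- 2 * Im (B False True)) * y = 0"
    using orth3 by blast
  define X where "X = Xw c x y"
  define Y where "Y = cnjm X"
  have f: "feas \<sigma> X Y"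
    unfolding feas_def
  proof (intro conjI)
    show "mtrace (mmult (ptrace_B \<sigma>) X) = 0" unfolding A_def[symmetric] X_def trAX[OF hA] using o1 by simp
    show "mtrace (mmult (ptrace_A \<sigma>) Y) = 0" unfolding B_def[symmetric] Y_def X_def trBY[OF hB]
      using o2 by (simp add: algebra_simps)
    show "mtrace (mmult (ptrace_B \<sigma>) (mmult X (madj X))) = 1"
      unfolding X_def XX(1)[OF n] mmult_mid_right tr_ptB ts ..
    show "mtrace (mmult (ptrace_A \<sigma>) (mmult Y (madj Y))) = 1"
      unfolding Y_def X_def XX(2)[OF n] mmult_mid_right tr_ptA ts ..
  qed
  define u where "u = (\<lambda>(a,b). Xw c x y a b)"
  have v: "mtrace (mmult \<sigma> (mtensor X (madj Y))) = 2 * qform \<sigma> psi + qform \<sigma> u - 1"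
    unfolding Y_def X_def tensor_id[OF n] u_def[symmetric] tr_M ts ..
  have "0 \<le> Re (qform \<sigma> u)" using ps unfolding psd_def by blast
  then have "2 * Re (qform \<sigma> psi) - 1 \<le> Re (mtrace (mmult \<sigma> (mtensor X (madj Y))))"
    unfolding v by simp
  also have "\<dots> \<le> mval \<sigma> X Y" unfolding mval_def by (rule complex_Re_le_cmod)
  also have "\<dots> \<le> maxcorr \<sigma>" by (rule maxcorr_ge[OF d f])
  finally show ?thesis .
qed

lemma sum24: "(\<Sum>i<(24::nat). g i) = (\<Sum>i<(12::nat). g i) + (\<Sum>i<(12::nat). g (i + 12))"
proof -
  have "(\<Sum>i<(24::nat). g i) = sum g {0..<12} + sum g {12..<24}"
    by (simp add: lessThan_atLeast0 sum.atLeastLessThan_concat)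
  also have "sum g {12..<24} = (\<Sum>i\<in>{0..<12}. g (i + 12))"
    using sum.shift_bounds_nat_ivl[of g 0 12 12] by simp
  finally show ?thesis by (simp add: lessThan_atLeast0)
qed

lemma mtrace_sum: "mtrace (\<lambda>x y. \<Sum>i\<in>I. c i * \<tau> i x y) = (\<Sum>i\<in>I. c i * mtrace (\<tau> i))"
  unfolding mtrace_def by (simp add: sum_distrib_left) (rule sum.swap)

lemma qform_sum: "qform (\<lambda>x y. \<Sum>i\<in>I. c i * \<tau> i x y) v = (\<Sum>i\<in>I. c i * qform (\<tau> i) v)"
proof -
  have "qform (\<lambda>x y. \<Sum>i\<in>I. c i * \<tau> i x y) v = (\<Sum>k\<in>UNIV. \<Sum>l\<in>UNIV. \<Sum>i\<in>I. c i * (cnj (v k) * \<tau> i k l * v l))"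
    unfolding qform_def by (simp add: sum_distrib_left sum_distrib_right mult_ac)
  also have "\<dots> = (\<Sum>i\<in>I. \<Sum>k\<in>UNIV. \<Sum>l\<in>UNIV. c i * (cnj (v k) * \<tau> i k l * v l))"
    by (subst perm3) simp
  also have "\<dots> = (\<Sum>i\<in>I. c i * qform (\<tau> i) v)"
    unfolding qform_def by (simp add: sum_distrib_left)
  finally show ?thesis .
qed

lemma qform_ebs: "qform (ebs z) v = cnj (v z) * v z"
  unfolding qform_def ebs_def by (simp add: ifz ifz5)

lemma twirl_dens:
  assumes "density \<sigma>"
  shows "(\<Sum>u<(12::nat). lconj (Wk u) \<sigma> x y) / 12
   = complex_of_real (Re (qform \<sigma> psi)) * Pm x y + (1 - complex_of_real (Re (qform \<sigma> psi))) * (mid x y - Pm x y) / 3"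
proof -
  have "Im (qform \<sigma> psi) = 0" using assms unfolding density_def psd_def by blast
  then have "qform \<sigma> psi = complex_of_real (Re (qform \<sigma> psi))" by (simp add: complex_eq_iff)
  moreover have "mtrace \<sigma> = 1" using assms unfolding density_def by blast
  ultimately show ?thesis unfolding twirl by metis
qed

definition e01 :: "(bool \<times> bool) cmat" where "e01 = ebs (False, True)"

lemma twirl_e01: "(\<Sum>u<(12::nat). lconj (Wk u) e01 x y) / 12 = (mid x y - Pm x y) / 3"
proof -
  have "qform e01 psi = 0" unfolding e01_def qform_ebs psi_def by simp
  moreover have "mtrace e01 = 1" using density_ebs unfolding e01_def density_def by blast
  ultimately show ?thesis unfolding twirl by simp
qed

lemma rho_iso: "rho_eps \<epsilon> x y = complex_of_real (1 - 3 * \<epsilon> / 4) * Pm x y + (1 - complex_of_real (1 - 3 * \<epsilon> / 4)) * (mid x y - Pm x y) / 3"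
  unfolding rho_alt by (simp add: field_simps)

definition tau :: "(bool \<times> bool) cmat \<Rightarrow> nat \<Rightarrow> (bool \<times> bool) cmat" where
  "tau \<sigma> i = (if i < 12 then lconj (Wk i) \<sigma> else lconj (Wk (i - 12)) e01)"

definition pp :: "real \<Rightarrow> nat \<Rightarrow> real" where
  "pp t i = (if i < 12 then t / 12 else (1 - t) / 12)"

lemma decomp:
  assumes d: "density \<sigma>" and tf: "t * Re (qform \<sigma> psi) = 1 - 3 * \<epsilon> / 4"
  shows "rho_eps \<epsilon> = (\<lambda>x y. \<Sum>i<(24::nat). complex_of_real (pp t i) * tau \<sigma> i x y)"
proof (rule ext, rule ext)
  fix x y
  define F where "F = Re (qform \<sigma> psi)"
  have "(\<Sum>i<(24::nat). complex_of_real (pp t i) * tau \<sigma> i x y)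
     = (\<Sum>i<(12::nat). complex_of_real (t / 12) * lconj (Wk i) \<sigma> x y)
       + (\<Sum>i<(12::nat). complex_of_real ((1 - t) / 12) * lconj (Wk i) e01 x y)"
    unfolding sum24 pp_def tau_def by simp
  also have "\<dots> = complex_of_real t * ((\<Sum>i<(12::nat). lconj (Wk i) \<sigma> x y) / 12)
       + complex_of_real (1 - t) * ((\<Sum>i<(12::nat). lconj (Wk i) e01 x y) / 12)"
    by (simp add: sum_distrib_left sum_divide_distrib)
  also have "\<dots> = complex_of_real t * (complex_of_real F * Pm x y + (1 - complex_of_real F) * (mid x y - Pm x y) / 3)
       + complex_of_real (1 - t) * ((mid x y - Pm x y) / 3)"
    unfolding twirl_dens[OF d] twirl_e01 F_def ..
  also have "\<dots> = complex_of_real (t * F) * Pm x y + (1 - complex_of_real (t * F)) * (mid x y - Pm x y) / 3"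
    by (simp add: field_simps)
  also have "\<dots> = rho_eps \<epsilon> x y" unfolding rho_iso F_def tf ..
  finally show "rho_eps \<epsilon> x y = (\<Sum>i<(24::nat). complex_of_real (pp t i) * tau \<sigma> i x y)" by simp
qed

lemma density_tau: "density \<sigma> \<Longrightarrow> density (tau \<sigma> i)"
  unfolding tau_def e01_def by (auto intro: density_lconj unitary_Wk density_ebs)

lemma maxcorr_tau: "density \<sigma> \<Longrightarrow> maxcorr (tau \<sigma> i) \<le> maxcorr \<sigma>"
proof -
  assume d: "density \<sigma>"
  show ?thesis
  proof (cases "i < 12")
    case True
    then show ?thesis unfolding tau_def Wk_def
      using maxcorr_lconj_le[OF unitary_Uk unitary_cnjm_Uk d] by simp
  next
    case False
    then have "maxcorr (tau \<sigma> i) \<le> maxcorr e01" unfolding tau_def Wk_def e01_def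
      using maxcorr_lconj_le[OF unitary_Uk unitary_cnjm_Uk density_ebs] by simp
    then show ?thesis unfolding e01_def maxcorr_ebs using maxcorr_nonneg[OF d] by simp
  qed
qed

lemma ent_elem_nonneg:
  fixes n :: nat
  assumes "0 < n" "\<forall>i<n. 0 \<le> p i \<and> density (\<tau> i)"
  shows "0 \<le> Max ((\<lambda>i. maxcorr (\<tau> i)) ` {..<n})"
proof -
  have "0 \<le> maxcorr (\<tau> 0)" using assms maxcorr_nonneg by blast
  also have "\<dots> \<le> Max ((\<lambda>i. maxcorr (\<tau> i)) ` {..<n})"
  proof (rule Max_ge)
    show "finite ((\<lambda>i. maxcorr (\<tau> i)) ` {..<n})" by simp
    show "maxcorr (\<tau> 0) \<in> (\<lambda>i. maxcorr (\<tau> i)) ` {..<n}" using assms(1) by simp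
  qed
  finally show ?thesis .
qed

lemma ent_ge_lam:
  fixes \<tau> :: "nat \<Rightarrow> (bool \<times> bool) cmat" and n :: nat
  assumes "0 \<le> \<epsilon>" "\<epsilon> \<le> 1" "0 < n" and h: "\<forall>i<n. 0 \<le> p i \<and> density (\<tau> i)"
    and r: "rho_eps \<epsilon> = (\<lambda>x y. \<Sum>i<n. complex_of_real (p i) * \<tau> i x y)"
  shows "lam \<epsilon> \<le> Max ((\<lambda>i. maxcorr (\<tau> i)) ` {..<n})"
proof -
  have "1 = mtrace (rho_eps \<epsilon>)" using density_rho[OF assms(1,2)] unfolding density_def by simp
  also have "\<dots> = (\<Sum>i<n. complex_of_real (p i) * mtrace (\<tau> i))" unfolding r mtrace_sum ..
  also have "\<dots> = (\<Sum>i<n. complex_of_real (p i))"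
    using h unfolding density_def by (intro sum.cong) auto
  finally have sp: "(\<Sum>i<n. p i) = 1" by (metis of_real_eq_1_iff of_real_sum)
  have "complex_of_real (1 - 3 * \<epsilon> / 4) = qform (rho_eps \<epsilon>) psi" using fid_rho by simp
  also have "\<dots> = (\<Sum>i<n. complex_of_real (p i) * qform (\<tau> i) psi)" unfolding r qform_sum ..
  finally have "Re (complex_of_real (1 - 3 * \<epsilon> / 4)) = Re (\<Sum>i<n. complex_of_real (p i) * qform (\<tau> i) psi)"
    by simp
  then have sf: "(\<Sum>i<n. p i * Re (qform (\<tau> i) psi)) = 1 - 3 * \<epsilon> / 4"
    by (simp add: Re_sum)
  have "\<exists>i<n. 1 - 3 * \<epsilon> / 4 \<le> Re (qform (\<tau> i) psi)"
  proof (rule ccontr)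
    assume "\<not> ?thesis"
    then have lt: "\<forall>i<n. Re (qform (\<tau> i) psi) < 1 - 3 * \<epsilon> / 4" by auto
    have "\<exists>i<n. 0 < p i"
    proof (rule ccontr)
      assume "\<not> ?thesis"
      then have "\<forall>i<n. p i = 0" using h by force
      then show False using sp by simp
    qed
    then obtain j where j: "j < n" "0 < p j" by blast
    have "(\<Sum>i<n. p i * Re (qform (\<tau> i) psi)) < (\<Sum>i<n. p i * (1 - 3 * \<epsilon> / 4))"
    proof (rule sum_strict_mono_ex1)
      show "finite {..<n}" by simp
      show "\<forall>i\<in>{..<n}. p i * Re (qform (\<tau> i) psi) \<le> p i * (1 - 3 * \<epsilon> / 4)"
        using lt h by (auto intro: mult_left_mono less_imp_le)
      show "\<exists>i\<in>{..<n}. p i * Re (qform (\<tau> i) psi) < p i * (1 - 3 * \<epsilon> / 4)"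
        using lt j by (auto intro: mult_strict_left_mono)
    qed
    also have "\<dots> = 1 - 3 * \<epsilon> / 4" using sp by (simp add: sum_distrib_right[symmetric])
    finally show False using sf by simp
  qed
  then obtain i where i: "i < n" "1 - 3 * \<epsilon> / 4 \<le> Re (qform (\<tau> i) psi)" by blast
  have "lam \<epsilon> \<le> maxcorr (\<tau> i)" unfolding lam_def
  proof (rule cInf_lower)
    show "maxcorr (\<tau> i) \<in> {maxcorr \<sigma> |\<sigma>. density \<sigma> \<and> 1 - 3 * \<epsilon> / 4 \<le> Re (qform \<sigma> psi)}"
      using i h by blast
    show "bdd_below {maxcorr \<sigma> |\<sigma> :: (bool\<times>bool) cmat. density \<sigma> \<and> 1 - 3 * \<epsilon> / 4 \<le> Re (qform \<sigma> psi)}"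
      by (rule bdd_belowI[of _ 0]) (auto intro: maxcorr_nonneg)
  qed
  also have "\<dots> \<le> Max ((\<lambda>i. maxcorr (\<tau> i)) ` {..<n})"
    by (rule Max_ge[OF finite_imageI[OF finite_lessThan]]) (use i in auto)
  finally show ?thesis .
qed

lemma maxent_le:
  assumes e: "0 \<le> \<epsilon>" "\<epsilon> \<le> 1" and d: "density \<sigma>" and f: "1 - 3 * \<epsilon> / 4 \<le> Re (qform \<sigma> psi)"
  shows "maxent (rho_eps \<epsilon>) \<le> maxcorr \<sigma>"
proof -
  define F where "F = Re (qform \<sigma> psi)"
  define t where "t = (1 - 3 * \<epsilon> / 4) / F"
  have Fp: "0 < F" using f e unfolding F_def by simp
  have tF: "t * Re (qform \<sigma> psi) = 1 - 3 * \<epsilon> / 4" unfolding t_def F_def[symmetric] using Fp by simp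
  have t0: "0 \<le> t" unfolding t_def using Fp e by simp
  have t1: "t \<le> 1" unfolding t_def using Fp f unfolding F_def[symmetric] by simp
  let ?S = "{Max ((\<lambda>i. maxcorr (\<tau> i)) ` {..<n}) | (n::nat) (p::nat \<Rightarrow> real) (\<tau>::nat \<Rightarrow> (bool \<times> bool) cmat).
     0 < n \<and> (\<forall>i<n. 0 \<le> p i \<and> density (\<tau> i)) \<and>
     rho_eps \<epsilon> = (\<lambda>x y. \<Sum>i<n. complex_of_real (p i) * \<tau> i x y)}"
  have mem: "Max ((\<lambda>i. maxcorr (tau \<sigma> i)) ` {..<24}) \<in> ?S"
  proof -
    have "\<forall>i<(24::nat). 0 \<le> pp t i \<and> density (tau \<sigma> i)"
      using t0 t1 density_tau[OF d] unfolding pp_def by auto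
    then show ?thesis using decomp[OF d tF]
      unfolding mem_Collect_eq
      by (intro exI[of _ "24::nat"] exI[of _ "pp t"] exI[of _ "tau \<sigma>"]) simp
  qed
  have bdd: "bdd_below ?S"
    by (rule bdd_belowI[of _ 0]) (auto intro: ent_elem_nonneg)
  have "maxent (rho_eps \<epsilon>) \<le> Max ((\<lambda>i. maxcorr (tau \<sigma> i)) ` {..<24})"
    unfolding maxent_def by (rule cInf_lower[OF mem bdd])
  also have "\<dots> \<le> maxcorr \<sigma>"
    by (subst Max_le_iff) (auto simp: lessThan_empty_iff intro: maxcorr_tau[OF d])
  finally show ?thesis .
qed

theorem theorem8:
  fixes \<epsilon> :: real
  assumes "0 \<le> \<epsilon>" and "\<epsilon> \<le> 1"
  shows "maxent (rho_eps \<epsilon>) = lam \<epsilon>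
    \<and> (2 / 3 \<le> \<epsilon> \<longrightarrow> lam \<epsilon> = 0)
    \<and> (\<epsilon> < 2 / 3 \<longrightarrow> 1 - 3 * \<epsilon> / 2 \<le> lam \<epsilon> \<and> lam \<epsilon> \<le> 1 - \<epsilon>)"
proof -
  let ?L = "{maxcorr \<sigma> |\<sigma> :: (bool\<times>bool) cmat. density \<sigma> \<and> 1 - 3 * \<epsilon> / 4 \<le> Re (qform \<sigma> psi)}"
  let ?S = "{Max ((\<lambda>i. maxcorr (\<tau> i)) ` {..<n}) | (n::nat) (p::nat \<Rightarrow> real) (\<tau>::nat \<Rightarrow> (bool \<times> bool) cmat).
     0 < n \<and> (\<forall>i<n. 0 \<le> p i \<and> density (\<tau> i)) \<and>
     rho_eps \<epsilon> = (\<lambda>x y. \<Sum>i<n. complex_of_real (p i) * \<tau> i x y)}"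
  have lam_eq: "lam \<epsilon> = Inf ?L" unfolding lam_def ..
  have ent_eq: "maxent (rho_eps \<epsilon>) = Inf ?S" unfolding maxent_def ..
  have rL: "maxcorr (rho_eps \<epsilon>) \<in> ?L" using density_rho[OF assms] fid_rho[of \<epsilon>] by auto
  have Lne: "?L \<noteq> {}" using rL by blast
  have bddL: "bdd_below ?L" by (rule bdd_belowI[of _ 0]) (auto intro: maxcorr_nonneg)
  have Sne: "?S \<noteq> {}"
  proof -
    have "rho_eps \<epsilon> = (\<lambda>x y. \<Sum>i<(1::nat). complex_of_real ((\<lambda>_. 1) i) * (\<lambda>_. rho_eps \<epsilon>) i x y)" by simp
    then have "Max ((\<lambda>i. maxcorr ((\<lambda>_. rho_eps \<epsilon>) i)) ` {..<(1::nat)}) \<in> ?S"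
      using density_rho[OF assms] unfolding mem_Collect_eq
      by (intro exI[of _ "1::nat"] exI[of _ "\<lambda>_. 1::real"] exI[of _ "\<lambda>_. rho_eps \<epsilon>"]) simp
    then show ?thesis by blast
  qed
  have e1: "maxent (rho_eps \<epsilon>) \<le> lam \<epsilon>"
    unfolding lam_eq
    by (rule cInf_greatest[OF Lne]) (auto intro: maxent_le[OF assms])
  have e2: "lam \<epsilon> \<le> maxent (rho_eps \<epsilon>)"
    unfolding ent_eq
    by (rule cInf_greatest[OF Sne]) (auto intro: ent_ge_lam[OF assms])
  have lam0: "0 \<le> lam \<epsilon>" unfolding lam_eq
    by (rule cInf_greatest[OF Lne]) (auto intro: maxcorr_nonneg)
  have part2: "2 / 3 \<le> \<epsilon> \<longrightarrow> lam \<epsilon> = 0"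
  proof
    assume "2 / 3 \<le> \<epsilon>"
    have q: "Re (qform (ebs (False, False)) psi) = 1/2" unfolding qform_ebs cnj_psi psi_psi dg_def
      by simp
    have "1 - 3 * \<epsilon> / 4 \<le> Re (qform (ebs (False, False)) psi)" using q \<open>2 / 3 \<le> \<epsilon>\<close> by simp
    then have "maxcorr (ebs (False, False)) \<in> ?L" using density_ebs[of "(False, False)"]
      unfolding mem_Collect_eq by (intro exI[of _ "ebs (False, False)"]) simp
    then have "Inf ?L \<le> maxcorr (ebs (False, False))" by (rule cInf_lower[OF _ bddL])
    then have "lam \<epsilon> \<le> 0" unfolding lam_eq maxcorr_ebs .
    then show "lam \<epsilon> = 0" using lam0 by simp
  qed
  have part3: "\<epsilon> < 2 / 3 \<longrightarrow> 1 - 3 * \<epsilon> / 2 \<le> lam \<epsilon> \<and> lam \<epsilon> \<le> 1 - \<epsilon>"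
  proof
    assume "\<epsilon> < 2 / 3"
    have lb: "1 - 3 * \<epsilon> / 2 \<le> lam \<epsilon>" unfolding lam_eq
    proof (rule cInf_greatest[OF Lne])
      fix m assume "m \<in> ?L"
      then obtain \<sigma> :: "(bool\<times>bool) cmat" where m: "m = maxcorr \<sigma>" and d: "density \<sigma>"
        and f: "1 - 3 * \<epsilon> / 4 \<le> Re (qform \<sigma> psi)" by blast
      have "1 - 3 * \<epsilon> / 2 \<le> 2 * Re (qform \<sigma> psi) - 1" using f by simp
      also have "\<dots> \<le> maxcorr \<sigma>" by (rule witness[OF d])
      finally show "1 - 3 * \<epsilon> / 2 \<le> m" using m by simp
    qed
    have ub: "lam \<epsilon> \<le> 1 - \<epsilon>"
    proof -
      have "lam \<epsilon> \<le> maxcorr (rho_eps \<epsilon>)" unfolding lam_eq by (rule cInf_lower[OF rL bddL])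
      also have "\<dots> \<le> 1 - \<epsilon>" by (rule maxcorr_rho_le[OF assms])
      finally show ?thesis .
    qed
    show "1 - 3 * \<epsilon> / 2 \<le> lam \<epsilon> \<and> lam \<epsilon> \<le> 1 - \<epsilon>" using lb ub by simp
  qed
  show ?thesis using e1 e2 part2 part3 by simp
qed

end
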